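(* Let $G$ be a finite non-abelian group satisfying condition (Con), and let $L$ be the Laplacian matrix of $\mathcal C_G$. Let $\mathcal F_0,\ldots,\mathcal F_{r-1}$ be the vertex sets of the connected components of the induced subgraph of $\mathcal C_G$ on $G\setminus Z(G)$ (so $r\ge 2$), and for each $i$ let $\lambda_i=|C(u)|$ for any $u\in\mathcal F_i$ (this is independent of the choice of $u$, and $\lambda_i=|\mathcal F_i|+|Z(G)|$). Then the spectrum of $L$, as a multiset, is the union of: $0$ with multiplicity $1$; $|Z(G)|$ with multiplicity $r-1$; for each $i\in\{0,\ldots,r-1\}$, $\lambda_i$ with multiplicity $|\mathcal F_i|-1$ (multiplicities adding when several $\lambda_i$ coincide); and $|G|$ with multiplicity $|Z(G)|$. In particular $L$ has exactly $|G|-1$ nonzero eigenvalues counted with multiplicity, and the largest eigenvalue of $L$ is $|G|$, with multiplicity $|Z(G)|$.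
   Context: For a finite group $G$, the commuting graph $\mathcal C_G$ is the simple undirected graph with vertex set $G$ in which distinct $u,v\in G$ are adjacent iff $uv=vu$. The Laplacian matrix of a simple graph is $L=D-A$ ($A$ adjacency matrix, $D$ diagonal degree matrix). $Z(G)$ is the center of $G$ and $C(v)=\{w\in G: wv=vw\}$ the centralizer of $v$. Condition (Con): for all $u,v\in G\setminus Z(G)$, either $C(u)=C(v)$ or $C(u)\cap C(v)=Z(G)$. *)

theory Defs
  imports "HOL-Algebra.Group" "Jordan_Normal_Form.Char_Poly"
begin

definition grp_center :: "('a, 'b) monoid_scheme \<Rightarrow> 'a set" where
  "grp_center G = {z \<in> carrier G. \<forall>g \<in> carrier G. z \<otimes>\<^bsub>G\<^esub> g = g \<otimes>\<^bsub>G\<^esub> z}"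

definition grp_centralizer :: "('a, 'b) monoid_scheme \<Rightarrow> 'a \<Rightarrow> 'a set" where
  "grp_centralizer G v = {w \<in> carrier G. w \<otimes>\<^bsub>G\<^esub> v = v \<otimes>\<^bsub>G\<^esub> w}"

definition con_condition :: "('a, 'b) monoid_scheme \<Rightarrow> bool" where
  "con_condition G \<longleftrightarrow>
     (\<forall>u \<in> carrier G - grp_center G. \<forall>v \<in> carrier G - grp_center G.
        grp_centralizer G u = grp_centralizer G v \<or>
        grp_centralizer G u \<inter> grp_centralizer G v = grp_center G)"

definition comm_adj :: "('a, 'b) monoid_scheme \<Rightarrow> 'a \<Rightarrow> 'a \<Rightarrow> bool" where
  "comm_adj G u v \<longleftrightarrow> u \<in> carrier G \<and> v \<in> carrier G \<and> u \<noteq> v \<and>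
     u \<otimes>\<^bsub>G\<^esub> v = v \<otimes>\<^bsub>G\<^esub> u"

definition comm_degree :: "('a, 'b) monoid_scheme \<Rightarrow> 'a \<Rightarrow> nat" where
  "comm_degree G v = card {w. comm_adj G v w}"

definition comm_laplacian :: "('a, 'b) monoid_scheme \<Rightarrow> 'a list \<Rightarrow> real mat" where
  "comm_laplacian G vs = mat (length vs) (length vs)
     (\<lambda>(i, j). if i = j then real (comm_degree G (vs ! i))
              else if comm_adj G (vs ! i) (vs ! j) then -1 else 0)"

definition nc_adj :: "('a, 'b) monoid_scheme \<Rightarrow> 'a \<Rightarrow> 'a \<Rightarrow> bool" where
  "nc_adj G u v \<longleftrightarrow> comm_adj G u v \<and> u \<notin> grp_center G \<and> v \<notin> grp_center G"

definition nc_components :: "('a, 'b) monoid_scheme \<Rightarrow> 'a set set" where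
  "nc_components G = (\<lambda>u. {v. (nc_adj G)\<^sup>*\<^sup>* u v}) ` (carrier G - grp_center G)"

definition spectrum_mset :: "real mat \<Rightarrow> real multiset \<Rightarrow> bool" where
  "spectrum_mset A M \<longleftrightarrow> char_poly A = (\<Prod>a\<in>#M. [:- a, 1:])"

end

theory Submission
  imports Defs
begin


lemma char_poly_eigbasis:
  fixes A P :: "real mat"
  assumes A: "A \<in> carrier_mat n n" and P: "P \<in> carrier_mat n n"
    and AP: "A * P = P * mat n n (\<lambda>(i,j). if i = j then d i else 0)"
    and dP: "det P \<noteq> 0"
  shows "char_poly A = (\<Prod>i\<leftarrow>[0..<n]. [:- d i, 1:])"
proof -
  define D where "D = mat n n (\<lambda>(i,j). if i = j then d i else (0::real))"
  have Dc: "D \<in> carrier_mat n n" unfolding D_def by auto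
  from det_non_zero_imp_unit[OF P dP, of "()"] obtain Q where Q: "Q \<in> carrier_mat n n"
    and QP: "Q * P = 1\<^sub>m n" and PQ: "P * Q = 1\<^sub>m n" unfolding Units_def ring_mat_def by auto
  have "A = A * (P * Q)" using A PQ by simp
  also have "\<dots> = (A * P) * Q" using A P Q by (simp add: assoc_mult_mat)
  also have "\<dots> = P * D * Q" using AP D_def by simp
  finally have "A = P * D * Q" .
  hence "similar_mat A D" using A P Q Dc PQ QP by (intro similar_matI[where n=n and P=P and Q=Q]) auto
  hence "char_poly A = char_poly D" by (rule char_poly_similar)
  also have "\<dots> = (\<Prod>a\<leftarrow>diag_mat D. [:- a, 1:])"
    by (rule char_poly_upper_triangular[OF Dc]) (auto simp: upper_triangular_def D_def)
  also have "diag_mat D = map d [0..<n]"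
    by (auto simp: diag_mat_def D_def intro!: nth_equalityI)
  finally show ?thesis by (simp add: comp_def)
qed



locale lapl =
  fixes V Z :: "'a set" and blk :: "'a \<Rightarrow> 'a set" and adj :: "'a \<Rightarrow> 'a \<Rightarrow> bool"
    and F0 F1 :: "'a set"
  assumes finV: "finite V" and ZV: "Z \<subseteq> V" and Zne: "Z \<noteq> {}"
  and blk_Z: "\<And>x. x \<in> Z \<Longrightarrow> blk x = Z"
  and blk_in: "\<And>x. x \<in> V \<Longrightarrow> x \<in> blk x"
  and blk_sub: "\<And>x. x \<in> V \<Longrightarrow> blk x \<subseteq> V"
  and blk_eq: "\<And>x y. x \<in> V \<Longrightarrow> y \<in> blk x \<Longrightarrow> blk y = blk x"
  and adj_iff: "\<And>x y. adj x y \<longleftrightarrow> x \<in> V \<and> y \<in> V \<and> x \<noteq> y \<and> (x \<in> Z \<or> y \<in> Z \<or> blk x = blk y)"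
  and F0: "F0 \<in> blk ` (V - Z)" and F1: "F1 \<in> blk ` (V - Z)" and F01: "F0 \<noteq> F1"
begin

definition "N w = {x. adj w x}"
definition "deg w = card (N w)"
definition "Lf w x = (if w = x then real (deg w) else if adj w x then -1 else (0::real))"
definition "rep B = (SOME x. x \<in> B)"

lemma finZ: "finite Z" using finV ZV finite_subset by blast
lemma fin_blk: "x \<in> V \<Longrightarrow> finite (blk x)" using finV blk_sub finite_subset by blast

lemma blk_mem_iff: "x \<in> V \<Longrightarrow> u \<in> V \<Longrightarrow> x \<in> blk u \<longleftrightarrow> blk x = blk u"
  using blk_eq blk_in by metis

lemma blk_Z_iff: "x \<in> V \<Longrightarrow> blk x = Z \<longleftrightarrow> x \<in> Z"
  using blk_Z blk_in by metis

lemma blk_nc: "x \<in> V \<Longrightarrow> x \<notin> Z \<Longrightarrow> blk x \<inter> Z = {}"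
  using blk_eq blk_Z blk_in by blast

lemma rep_in: "x \<in> V \<Longrightarrow> rep (blk x) \<in> blk x"
  unfolding rep_def using blk_in by (metis someI_ex)

lemma rep_V: "x \<in> V \<Longrightarrow> rep (blk x) \<in> V"
  using rep_in blk_sub by blast

lemma blk_rep: "x \<in> V \<Longrightarrow> blk (rep (blk x)) = blk x"
  using rep_in blk_eq by blast

lemma N_sub: "N w \<subseteq> V" unfolding N_def using adj_iff by auto
lemma finN: "finite (N w)" using N_sub finV finite_subset by blast

lemma N_Z: "w \<in> Z \<Longrightarrow> N w = V - {w}"
  unfolding N_def using adj_iff ZV by auto

lemma N_nc: assumes w: "w \<in> V" "w \<notin> Z" shows "N w = (Z \<union> blk w) - {w}"
proof (rule Set.set_eqI)
  fix x
  show "x \<in> N w \<longleftrightarrow> x \<in> (Z \<union> blk w) - {w}"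
  proof
    assume "x \<in> N w"
    then show "x \<in> (Z \<union> blk w) - {w}" unfolding N_def adj_iff using w blk_mem_iff by auto
  next
    assume x: "x \<in> (Z \<union> blk w) - {w}"
    then have "x \<in> V" using ZV blk_sub w by auto
    then show "x \<in> N w" unfolding N_def adj_iff using w x blk_mem_iff by auto
  qed
qed

lemma lap_sum:
  assumes w: "w \<in> V"
  shows "(\<Sum>x\<in>V. Lf w x * f x) = (\<Sum>x\<in>N w. f w - f x)"
proof -
  have wN: "w \<notin> N w" unfolding N_def using adj_iff by auto
  have "(\<Sum>x\<in>V. Lf w x * f x) = (\<Sum>x\<in>V. (if x = w then real (deg w) * f w else 0)
         + (if x \<in> N w then - f x else 0))"
    by (rule sum.cong) (auto simp: Lf_def N_def adj_iff)
  also have "\<dots> = real (deg w) * f w + (\<Sum>x\<in>V \<inter> N w. - f x)"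
    by (simp add: sum.distrib sum.inter_restrict finV w)
  also have "V \<inter> N w = N w" using N_sub by auto
  also have "(\<Sum>x\<in>N w. f w - f x) = real (deg w) * f w + (\<Sum>x\<in>N w. - f x)"
    by (simp add: sum_subtractf deg_def sum_negf)
  ultimately show ?thesis by simp
qed

definition "nv = real (card V)"
definition "zr = real (card Z)"

definition "ev y x = (if y \<noteq> rep (blk y) then (if x = y then 1 else if x = rep (blk y) then -1 else 0)
   else if y \<in> Z then 1
   else if blk y = F0 then (if x \<in> Z then nv - zr else - zr)
   else (if x \<in> F0 then real (card (blk y)) else if x \<in> blk y then - real (card F0) else 0))"

definition "mu y = (if y \<noteq> rep (blk y) then (if y \<in> Z then nv else zr + real (card (blk y)))
   else if y \<in> Z then 0 else if blk y = F0 then nv else zr)"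

lemma sum_pm: "a \<noteq> b \<Longrightarrow> finite S \<Longrightarrow>
  (\<Sum>x\<in>S. if x = a then 1 else if x = b then -1 else (0::real)) = (if a \<in> S then 1 else 0) - (if b \<in> S then 1 else 0)"
proof -
  assume ab: "a \<noteq> b" and S: "finite S"
  have "(\<Sum>x\<in>S. if x = a then 1 else if x = b then -1 else (0::real)) =
        (\<Sum>x\<in>S. (if x = a then 1 else 0) - (if x = b then 1 else 0))"
    using ab by (intro sum.cong) auto
  also have "\<dots> = (if a \<in> S then 1 else 0) - (if b \<in> S then 1 else 0)"
    using S by (simp add: sum_subtractf)
  finally show ?thesis .
qed

lemma sum_ind: assumes "finite S" shows "(\<Sum>x\<in>S. if x \<in> T then c else (0::real)) = c * real (card (S \<inter> T))"
proof -
  have "(\<Sum>x\<in>S. if x \<in> T then c else (0::real)) = sum (\<lambda>_. c) (S \<inter> T)"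
    by (rule sum.inter_restrict[symmetric, OF assms])
  then show ?thesis by simp
qed

lemma deg_plus: assumes w: "w \<in> V"
  shows "real (deg w) + 1 = (if w \<in> Z then nv else zr + real (card (blk w)))"
proof (cases "w \<in> Z")
  case True
  have "deg w = card (V - {w})" unfolding deg_def using N_Z[OF True] by simp
  also have "\<dots> = card V - 1" using w finV by (simp add: card_Diff_singleton)
  finally have d: "deg w = card V - 1" .
  have "card V > 0" using w finV by (auto simp: card_gt_0_iff)
  then have "real (card V - 1) + 1 = real (card V)" by linarith
  then show ?thesis using True d by (simp add: nv_def)
next
  case False
  have d: "Z \<inter> blk w = {}" using blk_nc[OF w False] by auto
  have "deg w = card ((Z \<union> blk w) - {w})" unfolding deg_def N_nc[OF w False] by simp
  also have "\<dots> = card (Z \<union> blk w) - 1"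
    using blk_in[OF w] finZ fin_blk[OF w] by (simp add: card_Diff_singleton)
  also have "card (Z \<union> blk w) = card Z + card (blk w)"
    using card_Un_disjoint[OF finZ fin_blk[OF w] d] .
  finally have dd: "deg w = card Z + card (blk w) - 1" .
  have "card (blk w) > 0" using blk_in[OF w] fin_blk[OF w] by (auto simp: card_gt_0_iff)
  then have "real (card Z + card (blk w) - 1) + 1 = real (card Z) + real (card (blk w))" by linarith
  then show ?thesis using False dd by (simp add: zr_def)
qed

lemma eig_diff:
  assumes y: "y \<in> V" and r: "r \<in> V" and yr: "y \<noteq> r" and br: "blk r = blk y" and w: "w \<in> V"
  defines "f \<equiv> (\<lambda>x. if x = y then 1 else if x = r then -1 else (0::real))"
  shows "(\<Sum>x\<in>N w. f w - f x) = (if y \<in> Z then nv else zr + real (card (blk y))) * f w"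
proof -
  have yZ: "y \<in> Z \<longleftrightarrow> r \<in> Z" using br blk_Z_iff y r by metis
  have s: "(\<Sum>x\<in>N w. f w - f x) = real (deg w) * f w - ((if y \<in> N w then 1 else 0) - (if r \<in> N w then 1 else 0))"
    unfolding f_def by (simp add: sum_subtractf deg_def sum_pm[OF yr finN])
  have nn: "\<And>u. u \<notin> N u" unfolding N_def using adj_iff by auto
  have ad: "\<And>u v. u \<in> N v \<longleftrightarrow> adj v u" unfolding N_def by auto
  show ?thesis
  proof (cases "w = y")
    case True
    have "r \<in> N y" unfolding ad adj_iff using y r yr yZ br by auto
    then show ?thesis using s True nn deg_plus[OF y] yr unfolding f_def by (auto simp: algebra_simps)
  next
    case False
    note wy = False
    show ?thesis
    proof (cases "w = r")
      case True
      have "y \<in> N r" unfolding ad adj_iff using y r yr yZ br by auto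
      then show ?thesis using s True nn deg_plus[OF r] yr yZ br unfolding f_def by (auto simp: algebra_simps)
    next
      case False
      have "y \<in> N w \<longleftrightarrow> r \<in> N w" unfolding ad adj_iff using y r yZ br wy False by auto
      then show ?thesis using s wy False unfolding f_def by auto
    qed
  qed
qed


lemma card_VZ: "real (card (V - Z)) = nv - zr"
proof -
  have "card (V - Z) = card V - card Z" using ZV finV by (simp add: card_Diff_subset finite_subset)
  moreover have "card Z \<le> card V" using ZV finV by (simp add: card_mono)
  ultimately show ?thesis by (simp add: nv_def zr_def)
qed

lemma eig_h:
  assumes w: "w \<in> V"
  defines "f \<equiv> (\<lambda>x. if x \<in> Z then nv - zr else - zr)"
  shows "(\<Sum>x\<in>N w. f w - f x) = nv * f w"
proof (cases "w \<in> Z")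
  case True
  have "(\<Sum>x\<in>N w. f w - f x) = (\<Sum>x\<in>V - {w}. if x \<in> -Z then nv else 0)"
    unfolding N_Z[OF True] f_def using True by (intro sum.cong) auto
  also have "\<dots> = nv * real (card ((V - {w}) \<inter> - Z))" by (rule sum_ind, simp add: finV)
  also have "(V - {w}) \<inter> - Z = V - Z" using True by auto
  finally show ?thesis using card_VZ True unfolding f_def by simp
next
  case False
  have "(\<Sum>x\<in>N w. f w - f x) = (\<Sum>x\<in>Z \<union> blk w - {w}. if x \<in> Z then - nv else 0)"
    unfolding N_nc[OF w False] f_def using False blk_nc[OF w False] by (intro sum.cong) auto
  also have "\<dots> = - nv * real (card ((Z \<union> blk w - {w}) \<inter> Z))"
    using finZ fin_blk[OF w] by (simp add: sum_ind)
  also have "(Z \<union> blk w - {w}) \<inter> Z = Z" using False by auto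
  finally show ?thesis using False unfolding f_def zr_def by simp
qed

lemma F0_props: "\<exists>u0. u0 \<in> V \<and> u0 \<notin> Z \<and> F0 = blk u0" using F0 by auto

lemma eig_k:
  assumes w: "w \<in> V" and y: "y \<in> V" and yZ: "y \<notin> Z" and yF: "blk y \<noteq> F0"
  defines "f \<equiv> (\<lambda>x. if x \<in> F0 then real (card (blk y)) else if x \<in> blk y then - real (card F0) else 0)"
  shows "(\<Sum>x\<in>N w. f w - f x) = zr * f w"
proof -
  obtain u0 where u0: "u0 \<in> V" "u0 \<notin> Z" and F0d: "F0 = blk u0" using F0_props by blast
  have dZ0: "F0 \<inter> Z = {}" using blk_nc[OF u0] F0d by auto
  have dZy: "blk y \<inter> Z = {}" using blk_nc[OF y yZ] by auto
  have d0y: "F0 \<inter> blk y = {}" using blk_eq u0 y F0d yF by blast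
  show ?thesis
  proof (cases "w \<in> Z")
    case True
    have fw: "f w = 0" unfolding f_def using True dZ0 dZy by auto
    have "(\<Sum>x\<in>N w. f w - f x) = - (\<Sum>x\<in>V - {w}. f x)"
      unfolding N_Z[OF True] fw by (simp add: sum_negf)
    also have "(\<Sum>x\<in>V - {w}. f x) = (\<Sum>x\<in>V. f x)"
      using finV w fw by (simp add: sum_diff1)
    also have "(\<Sum>x\<in>V. f x) = (\<Sum>x\<in>V. (if x \<in> F0 then real (card (blk y)) else 0)
                                   + (if x \<in> blk y then - real (card F0) else 0))"
      unfolding f_def using d0y by (intro sum.cong) auto
    also have "\<dots> = real (card (blk y)) * real (card (V \<inter> F0)) + - real (card F0) * real (card (V \<inter> blk y))"
      using finV by (simp add: sum.distrib sum_ind)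
    also have "V \<inter> F0 = F0" using blk_sub[OF u0(1)] F0d by auto
    also have "V \<inter> blk y = blk y" using blk_sub[OF y] by auto
    finally show ?thesis using fw by simp
  next
    case False
    have bc: "\<And>x. x \<in> blk w \<Longrightarrow> f x = f w"
    proof -
      fix x assume x: "x \<in> blk w"
      have xV: "x \<in> V" using x blk_sub[OF w] by auto
      have bx: "blk x = blk w" using blk_eq[OF w x] .
      have "x \<in> F0 \<longleftrightarrow> w \<in> F0" unfolding F0d using blk_mem_iff[OF xV u0(1)] blk_mem_iff[OF w u0(1)] bx by simp
      moreover have "x \<in> blk y \<longleftrightarrow> w \<in> blk y" using blk_mem_iff[OF xV y] blk_mem_iff[OF w y] bx by simp
      ultimately show "f x = f w" unfolding f_def by simp
    qed
    have fz: "\<And>x. x \<in> Z \<Longrightarrow> f x = 0" unfolding f_def using dZ0 dZy by auto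
    have "(\<Sum>x\<in>N w. f w - f x) = (\<Sum>x\<in>Z \<union> blk w - {w}. if x \<in> Z then f w else 0)"
      unfolding N_nc[OF w False] using bc fz blk_nc[OF w False] by (intro sum.cong) auto
    also have "\<dots> = f w * real (card ((Z \<union> blk w - {w}) \<inter> Z))"
      using finZ fin_blk[OF w] by (simp add: sum_ind)
    also have "(Z \<union> blk w - {w}) \<inter> Z = Z" using False by auto
    finally show ?thesis unfolding zr_def by simp
  qed
qed

lemma eigen:
  assumes w: "w \<in> V" and y: "y \<in> V"
  shows "(\<Sum>x\<in>V. Lf w x * ev y x) = mu y * ev y w"
proof -
  have L: "(\<Sum>x\<in>V. Lf w x * ev y x) = (\<Sum>x\<in>N w. ev y w - ev y x)" by (rule lap_sum[OF w])
  show ?thesis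
  proof (cases "y \<noteq> rep (blk y)")
    case True
    have "(\<Sum>x\<in>N w. ev y w - ev y x) = (\<Sum>x\<in>N w.
      (\<lambda>x. if x = y then 1 else if x = rep (blk y) then -1 else (0::real)) w -
      (\<lambda>x. if x = y then 1 else if x = rep (blk y) then -1 else (0::real)) x)"
      unfolding ev_def using True by simp
    also have "\<dots> = (if y \<in> Z then nv else zr + real (card (blk y))) *
       (\<lambda>x. if x = y then 1 else if x = rep (blk y) then -1 else (0::real)) w"
      by (rule eig_diff[OF y rep_V[OF y] True blk_rep[OF y] w])
    finally show ?thesis using L True unfolding mu_def ev_def by simp
  next
    case False
    then have ry: "rep (blk y) = y" by simp
    show ?thesis
    proof (cases "y \<in> Z")
      case True
      then show ?thesis using L ry unfolding ev_def mu_def by simp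
    next
      case False
      note yZ = False
      show ?thesis
      proof (cases "blk y = F0")
        case True
        have "(\<Sum>x\<in>N w. ev y w - ev y x) = (\<Sum>x\<in>N w.
          (\<lambda>x. if x \<in> Z then nv - zr else - zr) w - (\<lambda>x. if x \<in> Z then nv - zr else - zr) x)"
          unfolding ev_def using ry yZ True by simp
        also have "\<dots> = nv * (\<lambda>x. if x \<in> Z then nv - zr else - zr) w" by (rule eig_h[OF w])
        finally show ?thesis using L ry yZ True unfolding mu_def ev_def by simp
      next
        case False
        have "(\<Sum>x\<in>N w. ev y w - ev y x) = (\<Sum>x\<in>N w.
          (\<lambda>x. if x \<in> F0 then real (card (blk y)) else if x \<in> blk y then - real (card F0) else 0) w -
          (\<lambda>x. if x \<in> F0 then real (card (blk y)) else if x \<in> blk y then - real (card F0) else 0) x)"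
          unfolding ev_def using ry yZ False by simp
        also have "\<dots> = zr * (\<lambda>x. if x \<in> F0 then real (card (blk y)) else if x \<in> blk y then - real (card F0) else 0) w"
          by (rule eig_k[OF w y yZ False])
        finally show ?thesis using L ry yZ False unfolding mu_def ev_def by simp
      qed
    qed
  qed
qed


lemma rep_blk_eq: "x \<in> V \<Longrightarrow> y \<in> V \<Longrightarrow> blk x = blk y \<Longrightarrow> rep (blk x) = rep (blk y)" by simp

lemma ev_R_const:
  assumes y: "y \<in> V" and ry: "rep (blk y) = y" and w: "w \<in> V" and w': "w' \<in> V" and bw: "blk w = blk w'"
  shows "ev y w = ev y w'"
proof -
  obtain u0 where u0: "u0 \<in> V" "u0 \<notin> Z" and F0d: "F0 = blk u0" using F0_props by blast
  have "w \<in> Z \<longleftrightarrow> w' \<in> Z" using blk_Z_iff w w' bw by metis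
  moreover have "w \<in> F0 \<longleftrightarrow> w' \<in> F0" unfolding F0d using blk_mem_iff[OF w u0(1)] blk_mem_iff[OF w' u0(1)] bw by simp
  moreover have "w \<in> blk y \<longleftrightarrow> w' \<in> blk y" using blk_mem_iff[OF w y] blk_mem_iff[OF w' y] bw by simp
  ultimately show ?thesis unfolding ev_def using ry by simp
qed

lemma indep:
  assumes c: "\<And>w. w \<in> V \<Longrightarrow> (\<Sum>y\<in>V. c y * ev y w) = 0"
  shows "\<And>y. y \<in> V \<Longrightarrow> c y = 0"
proof -
  define R where "R = {y\<in>V. rep (blk y) = y}"
  define NR where "NR = V - R"
  define T where "T w = (\<Sum>y\<in>R. c y * ev y w)" for w
  have finR: "finite R" unfolding R_def using finV by simp
  have finNR: "finite NR" unfolding NR_def using finV by simp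
  have RV: "R \<subseteq> V" unfolding R_def by auto
  have repR: "\<And>x. x \<in> V \<Longrightarrow> rep (blk x) \<in> R" unfolding R_def using rep_V blk_rep by simp
  have Tc: "\<And>w w'. w \<in> V \<Longrightarrow> w' \<in> V \<Longrightarrow> blk w = blk w' \<Longrightarrow> T w = T w'"
  proof -
    fix w w' assume ww: "w \<in> V" "w' \<in> V" "blk w = blk w'"
    show "T w = T w'" unfolding T_def
    proof (intro sum.cong refl)
      fix y assume "y \<in> R"
      then have "y \<in> V" "rep (blk y) = y" unfolding R_def by auto
      then have "ev y w = ev y w'" using ev_R_const[of y w w'] ww by blast
      then show "c y * ev y w = c y * ev y w'" by simp
    qed
  qed
  have split: "\<And>w. (\<Sum>y\<in>V. c y * ev y w) = (\<Sum>y\<in>NR. c y * ev y w) + T w"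
  proof -
    fix w
    have "V = NR \<union> R" "NR \<inter> R = {}" unfolding NR_def using RV by auto
    then show "(\<Sum>y\<in>V. c y * ev y w) = (\<Sum>y\<in>NR. c y * ev y w) + T w"
      unfolding T_def using finR finNR by (simp add: sum.union_disjoint)
  qed
  have evNR: "\<And>y w. y \<in> NR \<Longrightarrow> ev y w = (if w = y then 1 else if w = rep (blk y) then -1 else 0)"
    unfolding NR_def R_def ev_def by auto
  have sNR: "\<And>w. w \<in> NR \<Longrightarrow> (\<Sum>y\<in>NR. c y * ev y w) = c w"
  proof -
    fix w assume w: "w \<in> NR"
    have "\<And>y. y \<in> NR \<Longrightarrow> w \<noteq> rep (blk y)" using w repR unfolding NR_def by auto
    then have "(\<Sum>y\<in>NR. c y * ev y w) = (\<Sum>y\<in>NR. if w = y then c y else 0)"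
      using evNR by (intro sum.cong) auto
    also have "\<dots> = c w" using w finNR by simp
    finally show "(\<Sum>y\<in>NR. c y * ev y w) = c w" .
  qed
  have sR: "\<And>w. w \<in> R \<Longrightarrow> (\<Sum>y\<in>NR. c y * ev y w) = - (\<Sum>y\<in>NR \<inter> blk w. c y)"
  proof -
    fix w assume w: "w \<in> R"
    have wV: "w \<in> V" and rw: "rep (blk w) = w" using w unfolding R_def by auto
    have "\<And>y. y \<in> NR \<Longrightarrow> w = rep (blk y) \<longleftrightarrow> y \<in> blk w"
    proof -
      fix y assume y: "y \<in> NR"
      then have yV: "y \<in> V" unfolding NR_def by auto
      show "w = rep (blk y) \<longleftrightarrow> y \<in> blk w"
        using blk_rep[OF yV] rw blk_mem_iff[OF yV wV] by metis
    qed
    moreover have "\<And>y. y \<in> NR \<Longrightarrow> w \<noteq> y" using w unfolding NR_def by auto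
    ultimately have "(\<Sum>y\<in>NR. c y * ev y w) = (\<Sum>y\<in>NR. if y \<in> blk w then - c y else 0)"
      using evNR by (intro sum.cong) auto
    also have "\<dots> = (\<Sum>y\<in>NR \<inter> blk w. - c y)" by (rule sum.inter_restrict[symmetric, OF finNR])
    finally show "(\<Sum>y\<in>NR. c y * ev y w) = - (\<Sum>y\<in>NR \<inter> blk w. c y)" by (simp add: sum_negf)
  qed
  have cNR: "\<And>w. w \<in> NR \<Longrightarrow> c w = - T w"
  proof -
    fix w assume w: "w \<in> NR"
    then have "w \<in> V" unfolding NR_def by auto
    from c[OF this] split sNR[OF w] show "c w = - T w" by simp
  qed
  have TR0: "\<And>w. w \<in> R \<Longrightarrow> T w = 0"
  proof -
    fix w assume w: "w \<in> R"
    have wV: "w \<in> V" using w RV by auto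
    have e1: "(\<Sum>y\<in>NR \<inter> blk w. c y) = T w" using c[OF wV] split sR[OF w] by simp
    have "(\<Sum>y\<in>NR \<inter> blk w. c y) = (\<Sum>y\<in>NR \<inter> blk w. - T w)"
    proof (intro sum.cong refl)
      fix y assume y: "y \<in> NR \<inter> blk w"
      then have yV: "y \<in> V" unfolding NR_def by auto
      have "blk y = blk w" using y blk_eq[OF wV] by auto
      then show "c y = - T w" using cNR y Tc[OF yV wV] by auto
    qed
    also have "\<dots> = - real (card (NR \<inter> blk w)) * T w" by simp
    finally have "(real (card (NR \<inter> blk w)) + 1) * T w = 0" using e1 by (simp add: algebra_simps)
    moreover have "real (card (NR \<inter> blk w)) + 1 \<noteq> 0"
      using of_nat_0_le_iff[of "card (NR \<inter> blk w)"] by linarith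
    ultimately show "T w = 0" by simp
  qed
  have T0: "\<And>w. w \<in> V \<Longrightarrow> T w = 0"
  proof -
    fix w assume w: "w \<in> V"
    have "T w = T (rep (blk w))" using Tc[OF w rep_V[OF w]] blk_rep[OF w] by simp
    then show "T w = 0" using TR0[OF repR[OF w]] by simp
  qed
  have cNR0: "\<And>w. w \<in> NR \<Longrightarrow> c w = 0" using cNR T0 unfolding NR_def by auto
  obtain u0 where u0: "u0 \<in> V" "u0 \<notin> Z" and F0d: "F0 = blk u0" using F0_props by blast
  obtain z0 where z0: "z0 \<in> Z" using Zne by blast
  have z0V: "z0 \<in> V" using z0 ZV by auto
  define rZ where "rZ = rep Z"
  define rF where "rF = rep F0"
  have rZR: "rZ \<in> R" unfolding rZ_def using repR[OF z0V] blk_Z[OF z0] by simp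
  have rFR: "rF \<in> R" unfolding rF_def F0d using repR[OF u0(1)] by simp
  have rZZ: "rZ \<in> Z" unfolding rZ_def using rep_in[OF z0V] blk_Z[OF z0] by simp
  have rFF: "rF \<in> F0" unfolding rF_def F0d using rep_in[OF u0(1)] .
  have dZ0: "F0 \<inter> Z = {}" using blk_nc[OF u0] F0d by auto
  have rFZ: "rF \<notin> Z" using rFF dZ0 by auto
  have rZF: "rZ \<noteq> rF" using rZZ rFZ by auto
  define R' where "R' = R - {rZ, rF}"
  have R'props: "\<And>y. y \<in> R' \<Longrightarrow> y \<in> V \<and> rep (blk y) = y \<and> y \<notin> Z \<and> blk y \<noteq> F0"
  proof -
    fix y assume y: "y \<in> R'"
    then have yV: "y \<in> V" and ry: "rep (blk y) = y" and yZ: "y \<noteq> rZ" "y \<noteq> rF"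
      unfolding R'_def R_def by auto
    have "y \<notin> Z" using yZ ry blk_Z unfolding rZ_def by metis
    moreover have "blk y \<noteq> F0" using yZ ry unfolding rF_def by metis
    ultimately show "y \<in> V \<and> rep (blk y) = y \<and> y \<notin> Z \<and> blk y \<noteq> F0" using yV ry by simp
  qed
  have finR': "finite R'" unfolding R'_def using finR by simp
  have Rsplit: "\<And>w. T w = c rZ * ev rZ w + c rF * ev rF w + (\<Sum>y\<in>R'. c y * ev y w)"
  proof -
    fix w
    have eq: "R = insert rZ (insert rF R')" unfolding R'_def using rZR rFR by auto
    have nin: "rZ \<notin> insert rF R'" "rF \<notin> R'" unfolding R'_def using rZF by auto
    have "T w = (\<Sum>y\<in>insert rZ (insert rF R'). c y * ev y w)" unfolding T_def using eq by simp
    also have "\<dots> = c rZ * ev rZ w + (c rF * ev rF w + (\<Sum>y\<in>R'. c y * ev y w))"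
      using finR' nin by (simp add: sum.insert)
    finally show "T w = c rZ * ev rZ w + c rF * ev rF w + (\<Sum>y\<in>R'. c y * ev y w)" by simp
  qed
  have rZr: "rep (blk rZ) = rZ" "rZ \<in> V" using rZR unfolding R_def by auto
  have rFr: "rep (blk rF) = rF" "rF \<in> V" "blk rF = F0" using rFR rFF blk_eq[OF u0(1)] F0d unfolding R_def by auto
  have evZ: "\<And>w. ev rZ w = 1" unfolding ev_def using rZr rZZ by simp
  have evF: "\<And>w. ev rF w = (if w \<in> Z then nv - zr else - zr)" unfolding ev_def using rFr rFZ by simp
  have evR': "\<And>y w. y \<in> R' \<Longrightarrow> ev y w = (if w \<in> F0 then real (card (blk y)) else if w \<in> blk y then - real (card F0) else 0)"
    unfolding ev_def using R'props by auto
  define a where "a = c rZ"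
  define b where "b = c rF"
  have "T z0 = a + b * (nv - zr)"
  proof -
    have "\<And>y. y \<in> R' \<Longrightarrow> ev y z0 = 0"
    proof -
      fix y assume y: "y \<in> R'"
      note p = R'props[OF y]
      have "z0 \<notin> F0" using dZ0 z0 by auto
      moreover have "z0 \<notin> blk y" using blk_nc p z0 by auto
      ultimately show "ev y z0 = 0" by (simp add: evR'[OF y])
    qed
    then show ?thesis using Rsplit[of z0] evZ evF z0 unfolding a_def b_def by simp
  qed
  then have e1: "a + b * (nv - zr) = 0" using T0[OF z0V] by simp
  have "T u0 = a - b * zr + (\<Sum>y\<in>R'. c y * real (card (blk y)))"
  proof -
    have "u0 \<in> F0" unfolding F0d using blk_in[OF u0(1)] .
    then show ?thesis using Rsplit[of u0] evZ evF u0 evR' unfolding a_def b_def by simp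
  qed
  then have e2: "a - b * zr + (\<Sum>y\<in>R'. c y * real (card (blk y))) = 0" using T0[OF u0(1)] by simp
  have F0pos: "real (card F0) > 0" unfolding F0d using blk_in[OF u0(1)] fin_blk[OF u0(1)] card_gt_0_iff by auto
  have e3: "\<And>y0. y0 \<in> R' \<Longrightarrow> c y0 = (a - b * zr) / real (card F0)"
  proof -
    fix y0 assume y0: "y0 \<in> R'"
    note p = R'props[OF y0]
    have y0F: "y0 \<notin> F0" using p blk_eq[OF u0(1)] F0d by auto
    have y0b: "y0 \<in> blk y0" using blk_in p by auto
    have oth: "\<And>y. y \<in> R' - {y0} \<Longrightarrow> ev y y0 = 0"
    proof -
      fix y assume y: "y \<in> R' - {y0}"
      note q = R'props[of y]
      have "y0 \<notin> blk y"
      proof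
        assume "y0 \<in> blk y"
        then have bb: "blk y0 = blk y" using blk_eq q y by auto
        have yy: "y \<in> R'" "y \<noteq> y0" using y by auto
        have r1: "rep (blk y) = y" using R'props[OF yy(1)] by simp
        have r2: "rep (blk y0) = y0" using p by simp
        show False using r1 r2 bb yy(2) by simp
      qed
      then show "ev y y0 = 0" using evR' y y0F by auto
    qed
    have "(\<Sum>y\<in>R'. c y * ev y y0) = c y0 * ev y0 y0 + (\<Sum>y\<in>R' - {y0}. c y * ev y y0)"
      using finR' y0 by (simp add: sum.remove)
    also have "(\<Sum>y\<in>R' - {y0}. c y * ev y y0) = 0" using oth by simp
    finally have "(\<Sum>y\<in>R'. c y * ev y y0) = - c y0 * real (card F0)" using evR'[OF y0] y0F y0b by simp
    then have "T y0 = a - b * zr - c y0 * real (card F0)"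
      using Rsplit[of y0] evZ evF p unfolding a_def b_def by simp
    then have "a - b * zr - c y0 * real (card F0) = 0" using T0 p by simp
    then show "c y0 = (a - b * zr) / real (card F0)" using F0pos by (simp add: field_simps)
  qed
  define K where "K = a - b * zr"
  have "(\<Sum>y\<in>R'. c y * real (card (blk y))) = K * ((\<Sum>y\<in>R'. real (card (blk y))) / real (card F0))"
    using e3 unfolding K_def by (simp add: sum_divide_distrib sum_distrib_left)
  with e2 have "K * (1 + (\<Sum>y\<in>R'. real (card (blk y))) / real (card F0)) = 0"
    unfolding K_def by (simp add: algebra_simps)
  moreover have "(\<Sum>y\<in>R'. real (card (blk y))) / real (card F0) \<ge> 0" using F0pos by (simp add: sum_nonneg)
  ultimately have K0: "K = 0" by (metis add_pos_nonneg less_numeral_extra(1) mult_eq_0_iff order_less_irrefl)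
  have cR'0: "\<And>y. y \<in> R' \<Longrightarrow> c y = 0" using e3 K0 unfolding K_def by simp
  have nvpos: "nv > 0" unfolding nv_def using z0V finV card_gt_0_iff by auto
  have "b * nv = 0" using e1 K0 unfolding K_def by (simp add: algebra_simps)
  then have b0: "b = 0" using nvpos by simp
  then have a0: "a = 0" using K0 unfolding K_def by simp
  fix y assume y: "y \<in> V"
  show "c y = 0"
  proof (cases "y \<in> NR")
    case True then show ?thesis using cNR0 by simp
  next
    case False
    then have "y \<in> R" using y unfolding NR_def by auto
    then have "y = rZ \<or> y = rF \<or> y \<in> R'" unfolding R'_def by auto
    then show ?thesis using a0 b0 cR'0 unfolding a_def b_def by auto
  qed
qed


lemma sum_nth_set: "distinct vs \<Longrightarrow> (\<Sum>k\<in>{0..<length vs}. g (vs ! k)) = sum g (set vs)"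
proof -
  assume d: "distinct vs"
  have "sum g (set vs) = sum g (nth vs ` {0..<length vs})" by (rule arg_cong[where f="sum g"]) (auto simp: set_conv_nth)
  also have "\<dots> = sum (g \<circ> nth vs) {0..<length vs}"
    by (rule sum.reindex) (use d in \<open>auto simp: inj_on_def nth_eq_iff_index_eq\<close>)
  finally show ?thesis by simp
qed

lemma charpoly_abs:
  assumes d: "distinct vs" and sv: "set vs = V"
  shows "char_poly (mat (length vs) (length vs) (\<lambda>(i,j). Lf (vs ! i) (vs ! j)))
       = (\<Prod>i\<leftarrow>[0..<length vs]. [:- mu (vs ! i), 1:])"
proof -
  define n where "n = length vs"
  define A where "A = mat n n (\<lambda>(i,j). Lf (vs ! i) (vs ! j))"
  define P where "P = mat n n (\<lambda>(i,j). ev (vs ! j) (vs ! i))"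
  define D where "D = mat n n (\<lambda>(i,j). if i = j then mu (vs ! i) else 0)"
  have inV: "\<And>i. i < n \<Longrightarrow> vs ! i \<in> V" using sv n_def by auto
  have AP: "A * P = P * D"
  proof (rule eq_matI)
    fix i j assume i: "i < dim_row (P * D)" and j: "j < dim_col (P * D)"
    then have i: "i < n" and j: "j < n" by (auto simp: P_def D_def)
    have "(A * P) $$ (i, j) = (\<Sum>k\<in>{0..<n}. Lf (vs ! i) (vs ! k) * ev (vs ! j) (vs ! k))"
      using i j by (simp add: A_def P_def scalar_prod_def)
    also have "\<dots> = (\<Sum>x\<in>V. Lf (vs ! i) x * ev (vs ! j) x)"
      using sum_nth_set[OF d, of "\<lambda>x. Lf (vs ! i) x * ev (vs ! j) x"] sv n_def by simp
    also have "\<dots> = mu (vs ! j) * ev (vs ! j) (vs ! i)" by (rule eigen[OF inV[OF i] inV[OF j]])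
    also have "\<dots> = (P * D) $$ (i, j)"
    proof -
      have "(P * D) $$ (i, j) = (\<Sum>k\<in>{0..<n}. ev (vs ! k) (vs ! i) * (if k = j then mu (vs ! k) else 0))"
        using i j by (simp add: P_def D_def scalar_prod_def)
      also have "\<dots> = (\<Sum>k\<in>{0..<n}. if k = j then ev (vs ! k) (vs ! i) * mu (vs ! k) else 0)"
        by (intro sum.cong) auto
      also have "\<dots> = ev (vs ! j) (vs ! i) * mu (vs ! j)" using j by simp
      finally show ?thesis by simp
    qed
    finally show "(A * P) $$ (i, j) = (P * D) $$ (i, j)" .
  qed (auto simp: A_def P_def D_def)
  have Pc: "P \<in> carrier_mat n n" unfolding P_def by simp
  have dP: "det P \<noteq> 0"
  proof
    assume "det P = 0"
    then obtain v where v: "v \<in> carrier_vec n" "v \<noteq> 0\<^sub>v n" "P *\<^sub>v v = 0\<^sub>v n"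
      using det_0_iff_vec_prod_zero_field[OF Pc] by blast
    define c where "c y = v $ (THE k. k < n \<and> vs ! k = y)" for y
    have cv: "\<And>k. k < n \<Longrightarrow> c (vs ! k) = v $ k"
    proof -
      fix k assume k: "k < n"
      have "(THE k'. k' < n \<and> vs ! k' = vs ! k) = k"
        by (rule the_equality) (use k d n_def in \<open>auto simp: nth_eq_iff_index_eq\<close>)
      then show "c (vs ! k) = v $ k" unfolding c_def by simp
    qed
    have "\<And>w. w \<in> V \<Longrightarrow> (\<Sum>y\<in>V. c y * ev y w) = 0"
    proof -
      fix w assume w: "w \<in> V"
      then obtain i where i: "i < n" and wi: "w = vs ! i" using sv n_def by (metis in_set_conv_nth)
      have "0 = (P *\<^sub>v v) $ i" using v(3) i by simp
      also have "\<dots> = (\<Sum>k\<in>{0..<n}. ev (vs ! k) w * v $ k)"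
        using i v(1) wi by (simp add: P_def scalar_prod_def)
      also have "\<dots> = (\<Sum>k\<in>{0..<n}. c (vs ! k) * ev (vs ! k) w)"
        using cv by (intro sum.cong) auto
      also have "\<dots> = (\<Sum>y\<in>V. c y * ev y w)"
        using sum_nth_set[OF d, of "\<lambda>y. c y * ev y w"] sv n_def by simp
      finally show "(\<Sum>y\<in>V. c y * ev y w) = 0" by simp
    qed
    then have "\<And>y. y \<in> V \<Longrightarrow> c y = 0" by (rule indep)
    then have "v = 0\<^sub>v n" using cv inV v(1) by (intro eq_vecI) auto
    with v(2) show False by simp
  qed
  have Ac: "A \<in> carrier_mat n n" unfolding A_def by simp
  have "char_poly A = (\<Prod>i\<leftarrow>[0..<n]. [:- mu (vs ! i), 1:])"
    by (rule char_poly_eigbasis[OF Ac Pc AP[unfolded D_def] dP])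
  then show ?thesis unfolding A_def n_def .
qed


lemma sum_single_mset: "finite A \<Longrightarrow> image_mset f (mset_set A) = (\<Sum>x\<in>A. {#f x#})"
  by (induct A rule: finite_induct) auto

lemma sum_const_mset: "finite A \<Longrightarrow> (\<Sum>x\<in>A. {#c#}) = replicate_mset (card A) c"
  by (induct A rule: finite_induct) auto

definition "comps = blk ` (V - Z)"

definition "Mabs = {#0#} + replicate_mset (card comps - 1) zr
   + (\<Sum>F\<in>comps. replicate_mset (card F - 1) (zr + real (card F))) + replicate_mset (card Z) nv"

lemma fin_comps: "finite comps" unfolding comps_def using finV by simp

lemma comps_props: "B \<in> comps \<Longrightarrow> \<exists>u. u \<in> V \<and> u \<notin> Z \<and> B = blk u" unfolding comps_def by auto

lemma Union_comps: "\<Union> comps = V - Z"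
proof
  show "\<Union> comps \<subseteq> V - Z" unfolding comps_def using blk_sub blk_nc by blast
  show "V - Z \<subseteq> \<Union> comps" unfolding comps_def using blk_in by blast
qed

lemma comps_disj: "A \<in> comps \<Longrightarrow> B \<in> comps \<Longrightarrow> A \<noteq> B \<Longrightarrow> A \<inter> B = {}"
  unfolding comps_def using blk_eq by blast

lemma block_sum:
  assumes B: "B \<in> comps"
  shows "(\<Sum>y\<in>B. {#mu y#}) = {#if B = F0 then nv else zr#} + replicate_mset (card B - 1) (zr + real (card B))"
proof -
  obtain u where u: "u \<in> V" "u \<notin> Z" and Bu: "B = blk u" using comps_props[OF B] by blast
  define r where "r = rep B"
  have rB: "r \<in> B" unfolding r_def Bu using rep_in[OF u(1)] .
  have finB: "finite B" using fin_blk[OF u(1)] Bu by simp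
  have BV: "B \<subseteq> V" using blk_sub[OF u(1)] Bu by simp
  have BZ: "B \<inter> Z = {}" using blk_nc[OF u] Bu by simp
  have bB: "\<And>y. y \<in> B \<Longrightarrow> blk y = B" using blk_eq[OF u(1)] Bu by simp
  have mur: "mu r = (if B = F0 then nv else zr)"
    unfolding mu_def using bB[OF rB] rB BZ r_def by auto
  have muy: "\<And>y. y \<in> B - {r} \<Longrightarrow> mu y = zr + real (card B)"
    unfolding mu_def using bB BZ r_def by auto
  have "(\<Sum>y\<in>B. {#mu y#}) = {#mu r#} + (\<Sum>y\<in>B - {r}. {#mu y#})"
    using finB rB by (simp add: sum.remove)
  also have "(\<Sum>y\<in>B - {r}. {#mu y#}) = (\<Sum>y\<in>B - {r}. {#zr + real (card B)#})"
    using muy by (intro sum.cong) auto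
  also have "\<dots> = replicate_mset (card B - 1) (zr + real (card B))"
    using finB rB by (simp add: sum_const_mset)
  finally show ?thesis using mur by simp
qed

lemma Z_sum: "(\<Sum>y\<in>Z. {#mu y#}) = {#0#} + replicate_mset (card Z - 1) nv"
proof -
  obtain z0 where z0: "z0 \<in> Z" using Zne by blast
  have z0V: "z0 \<in> V" using z0 ZV by auto
  define r where "r = rep Z"
  have rZ: "r \<in> Z" unfolding r_def using rep_in[OF z0V] blk_Z[OF z0] by simp
  have mur: "mu r = 0" unfolding mu_def using rZ blk_Z r_def by auto
  have muy: "\<And>y. y \<in> Z - {r} \<Longrightarrow> mu y = nv" unfolding mu_def using blk_Z r_def by auto
  have "(\<Sum>y\<in>Z. {#mu y#}) = {#mu r#} + (\<Sum>y\<in>Z - {r}. {#mu y#})"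
    using finZ rZ by (simp add: sum.remove)
  also have "(\<Sum>y\<in>Z - {r}. {#mu y#}) = (\<Sum>y\<in>Z - {r}. {#nv#})"
    using muy by (intro sum.cong) auto
  also have "\<dots> = replicate_mset (card Z - 1) nv"
    using finZ rZ by (simp add: sum_const_mset)
  finally show ?thesis using mur by simp
qed

lemma F0_comps: "F0 \<in> comps" unfolding comps_def using F0 .

lemma special_sum: "(\<Sum>B\<in>comps. {#if B = F0 then nv else zr#}) = {#nv#} + replicate_mset (card comps - 1) zr"
proof -
  have "(\<Sum>B\<in>comps. {#if B = F0 then nv else zr#}) = {#nv#} + (\<Sum>B\<in>comps - {F0}. {#if B = F0 then nv else zr#})"
    using fin_comps F0_comps by (simp add: sum.remove)
  also have "(\<Sum>B\<in>comps - {F0}. {#if B = F0 then nv else zr#}) = (\<Sum>B\<in>comps - {F0}. {#zr#})"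
    by (intro sum.cong) auto
  also have "\<dots> = replicate_mset (card comps - 1) zr"
    using fin_comps F0_comps by (simp add: sum_const_mset)
  finally show ?thesis .
qed

lemma mset_mu:
  assumes d: "distinct vs" and sv: "set vs = V"
  shows "image_mset mu (mset vs) = Mabs"
proof -
  have "image_mset mu (mset vs) = image_mset mu (mset_set V)" using mset_set_set[OF d] sv by simp
  also have "\<dots> = (\<Sum>y\<in>V. {#mu y#})" using finV by (rule sum_single_mset)
  also have "(\<Sum>y\<in>V. {#mu y#}) = (\<Sum>y\<in>V - Z. {#mu y#}) + (\<Sum>y\<in>Z. {#mu y#})"
    by (rule sum.subset_diff[OF ZV finV])
  also have "(\<Sum>y\<in>V - Z. {#mu y#}) = (\<Sum>B\<in>comps. \<Sum>y\<in>B. {#mu y#})"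
  proof -
    have "\<forall>A\<in>comps. finite A" using comps_props fin_blk by blast
    moreover have "\<forall>A\<in>comps. \<forall>B\<in>comps. A \<noteq> B \<longrightarrow> A \<inter> B = {}" using comps_disj by blast
    ultimately have "(\<Sum>y\<in>\<Union>comps. {#mu y#}) = (\<Sum>B\<in>comps. \<Sum>y\<in>B. {#mu y#})" by (simp add: sum.Union_disjoint)
    then show ?thesis by (simp only: Union_comps)
  qed
  also have "\<dots> = (\<Sum>B\<in>comps. {#if B = F0 then nv else zr#} + replicate_mset (card B - 1) (zr + real (card B)))"
    using block_sum by (intro sum.cong) auto
  also have "\<dots> = {#nv#} + replicate_mset (card comps - 1) zr + (\<Sum>B\<in>comps. replicate_mset (card B - 1) (zr + real (card B)))"
    by (simp only: sum.distrib special_sum)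
  finally have e: "image_mset mu (mset vs) = ({#nv#} + replicate_mset (card comps - 1) zr
      + (\<Sum>B\<in>comps. replicate_mset (card B - 1) (zr + real (card B)))) + ({#0#} + replicate_mset (card Z - 1) nv)"
    using Z_sum by simp
  have cz: "card Z > 0" using finZ Zne by (simp add: card_gt_0_iff)
  have "replicate_mset (card Z - 1) nv + {#nv#} = replicate_mset (card Z) nv"
    using cz by (cases "card Z") auto
  then show ?thesis unfolding e Mabs_def by (simp add: add_ac)
qed


lemma nv_pos: "nv > 0" unfolding nv_def using finV Zne ZV by (auto simp: card_gt_0_iff)
lemma zr_pos: "zr > 0" unfolding zr_def using finZ Zne by (auto simp: card_gt_0_iff)

lemma comp_lt: assumes F: "F \<in> comps" shows "zr + real (card F) < nv"
proof -
  obtain G where G: "G \<in> comps" "G \<noteq> F" using F0_comps F01 F1 unfolding comps_def by blast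
  obtain u where u: "u \<in> V" "u \<notin> Z" and Fu: "F = blk u" using comps_props[OF F] by blast
  obtain v where v: "v \<in> V" "v \<notin> Z" and Gv: "G = blk v" using comps_props[OF G(1)] by blast
  have fF: "finite F" "finite G" using fin_blk u v Fu Gv by auto
  have d1: "Z \<inter> F = {}" using blk_nc[OF u] Fu by auto
  have d2: "(Z \<union> F) \<inter> G = {}" using blk_nc[OF v] Gv comps_disj[OF G(1) F] G(2) by auto
  have sub: "Z \<union> F \<union> G \<subseteq> V" using ZV blk_sub u v Fu Gv by auto
  have "card (Z \<union> F \<union> G) = card Z + card F + card G"
    using d1 d2 finZ fF by (simp add: card_Un_disjoint)
  moreover have "card (Z \<union> F \<union> G) \<le> card V" using sub finV by (simp add: card_mono)
  moreover have "card G > 0" using fF blk_in[OF v(1)] Gv by (auto simp: card_gt_0_iff)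
  ultimately have "card Z + card F < card V" by linarith
  then show ?thesis unfolding zr_def nv_def by linarith
qed

lemma zr_lt: "zr < nv" using comp_lt[OF F0_comps] by simp

lemma card_comps: "card comps \<ge> 2"
proof -
  have "{F0, F1} \<subseteq> comps" using F0 F1 unfolding comps_def by auto
  then have "card {F0, F1} \<le> card comps" using fin_comps by (simp add: card_mono)
  then show ?thesis using F01 by simp
qed

definition "M' = replicate_mset (card comps - 1) zr
   + (\<Sum>F\<in>comps. replicate_mset (card F - 1) (zr + real (card F))) + replicate_mset (card Z) nv"

lemma Mabs_M': "Mabs = add_mset 0 M'" unfolding Mabs_def M'_def by (simp add: add_ac)

lemma count_M'0: "count M' 0 = 0"
proof -
  have "\<And>F. F \<in> comps \<Longrightarrow> zr + real (card F) \<noteq> 0" using zr_pos by (simp add: add_pos_nonneg)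
  then have "count (\<Sum>F\<in>comps. replicate_mset (card F - 1) (zr + real (card F))) 0 = 0"
    by (simp add: count_sum)
  then show ?thesis unfolding M'_def using zr_pos nv_pos by simp
qed

lemma size_filter:
  assumes d: "distinct vs" and sv: "set vs = V"
  shows "size (filter_mset (\<lambda>x. x \<noteq> 0) Mabs) = card V - 1"
proof -
  have "filter_mset (\<lambda>x. x \<noteq> 0) Mabs = M'"
  proof (rule multiset_eqI)
    fix x show "count (filter_mset (\<lambda>x. x \<noteq> 0) Mabs) x = count M' x"
      unfolding Mabs_M' using count_M'0 by (cases "x = 0") auto
  qed
  moreover have "size Mabs = card V"
    using mset_mu[OF d sv] d sv by (metis size_image_mset size_mset distinct_card)
  ultimately show ?thesis unfolding Mabs_M' by simp
qed

lemma count_nv: "count Mabs nv = card Z"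
proof -
  have "\<And>F. F \<in> comps \<Longrightarrow> nv \<noteq> zr + real (card F)" using comp_lt by fastforce
  then have "count (\<Sum>F\<in>comps. replicate_mset (card F - 1) (zr + real (card F))) nv = 0"
    by (simp add: count_sum)
  then show ?thesis unfolding Mabs_def using zr_lt nv_pos by simp
qed

lemma Max_Mabs:
  assumes d: "distinct vs" and sv: "set vs = V"
  shows "Max (set_mset Mabs) = nv"
proof -
  have sm: "set_mset Mabs = mu ` V" using mset_mu[OF d sv, symmetric] sv by simp
  have le: "\<And>y. y \<in> V \<Longrightarrow> mu y \<le> nv"
  proof -
    fix y assume y: "y \<in> V"
    show "mu y \<le> nv"
    proof (cases "y \<in> Z")
      case True then show ?thesis unfolding mu_def using nv_pos by auto
    next
      case False
      have "blk y \<in> comps" unfolding comps_def using y False by auto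
      then have "zr + real (card (blk y)) \<le> nv" using comp_lt by fastforce
      then show ?thesis unfolding mu_def using zr_lt nv_pos by auto
    qed
  qed
  have "nv \<in> set_mset Mabs" unfolding Mabs_def using Zne finZ by (auto simp: card_gt_0_iff)
  moreover have "\<And>x. x \<in> set_mset Mabs \<Longrightarrow> x \<le> nv" unfolding sm using le by auto
  ultimately show ?thesis by (intro Max_eqI) auto
qed

end


lemma Zc_sub: "grp_center G \<subseteq> carrier G" unfolding grp_center_def by auto
lemma C_sub: "grp_centralizer G u \<subseteq> carrier G" unfolding grp_centralizer_def by auto
lemma one_Z: assumes "group G" shows "\<one>\<^bsub>G\<^esub> \<in> grp_center G"
proof -
  interpret group G by fact
  show ?thesis unfolding grp_center_def by simp
qed
lemma self_C: "u \<in> carrier G \<Longrightarrow> u \<in> grp_centralizer G u" unfolding grp_centralizer_def by simp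
lemma Z_C: "u \<in> carrier G \<Longrightarrow> grp_center G \<subseteq> grp_centralizer G u"
  unfolding grp_centralizer_def grp_center_def by auto
lemma C_sym: "u \<in> carrier G \<Longrightarrow> v \<in> carrier G \<Longrightarrow> v \<in> grp_centralizer G u \<longleftrightarrow> u \<in> grp_centralizer G v"
  unfolding grp_centralizer_def by auto

definition gblk :: "('a, 'b) monoid_scheme \<Rightarrow> 'a \<Rightarrow> 'a set" where
  "gblk G x = (if x \<in> grp_center G then grp_center G else grp_centralizer G x - grp_center G)"

context
  fixes G :: "('a, 'b) monoid_scheme"
  assumes grp: "group G" and con: "con_condition G"
begin

lemma C_eq:
  assumes u: "u \<in> carrier G" "u \<notin> grp_center G" and v: "v \<in> carrier G" "v \<notin> grp_center G"
    and vu: "v \<in> grp_centralizer G u"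
  shows "grp_centralizer G v = grp_centralizer G u"
proof -
  have "v \<in> grp_centralizer G u \<inter> grp_centralizer G v" using vu self_C[OF v(1)] by simp
  then have "grp_centralizer G u \<inter> grp_centralizer G v \<noteq> grp_center G" using v(2) by auto
  then show ?thesis using con u v unfolding con_condition_def by auto
qed


lemma comm_iff:
  assumes x: "x \<in> carrier G" and y: "y \<in> carrier G"
  shows "x \<otimes>\<^bsub>G\<^esub> y = y \<otimes>\<^bsub>G\<^esub> x \<longleftrightarrow> (x \<in> grp_center G \<or> y \<in> grp_center G \<or> gblk G x = gblk G y)"
proof
  assume c: "x \<otimes>\<^bsub>G\<^esub> y = y \<otimes>\<^bsub>G\<^esub> x"
  show "x \<in> grp_center G \<or> y \<in> grp_center G \<or> gblk G x = gblk G y"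
  proof (cases "x \<in> grp_center G \<or> y \<in> grp_center G")
    case False
    have "y \<in> grp_centralizer G x" unfolding grp_centralizer_def using c y by simp
    then have "grp_centralizer G y = grp_centralizer G x" using C_eq x y False by blast
    then show ?thesis unfolding gblk_def using False by simp
  qed blast
next
  assume h: "x \<in> grp_center G \<or> y \<in> grp_center G \<or> gblk G x = gblk G y"
  show "x \<otimes>\<^bsub>G\<^esub> y = y \<otimes>\<^bsub>G\<^esub> x"
  proof (cases "x \<in> grp_center G \<or> y \<in> grp_center G")
    case True
    then show ?thesis using x y unfolding grp_center_def by auto
  next
    case False
    then have "grp_centralizer G x - grp_center G = grp_centralizer G y - grp_center G"
      using h unfolding gblk_def by simp
    moreover have "y \<in> grp_centralizer G y - grp_center G" using self_C[OF y] False by simp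
    ultimately have "y \<in> grp_centralizer G x" by blast
    then show ?thesis unfolding grp_centralizer_def by simp
  qed
qed

lemma comp_eq:
  assumes u: "u \<in> carrier G" "u \<notin> grp_center G"
  shows "{v. (nc_adj G)\<^sup>*\<^sup>* u v} = grp_centralizer G u - grp_center G"
proof (rule Set.set_eqI)
  fix v
  show "v \<in> {v. (nc_adj G)\<^sup>*\<^sup>* u v} \<longleftrightarrow> v \<in> grp_centralizer G u - grp_center G"
  proof
    assume "v \<in> {v. (nc_adj G)\<^sup>*\<^sup>* u v}"
    then have "(nc_adj G)\<^sup>*\<^sup>* u v" by simp
    then show "v \<in> grp_centralizer G u - grp_center G"
    proof (induction rule: rtranclp_induct)
      case base
      then show ?case using self_C[OF u(1)] u(2) by simp
    next
      case (step v w)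
      have v: "v \<in> carrier G" "v \<notin> grp_center G" using step.IH C_sub[of G u] by auto
      have w: "w \<in> carrier G" "w \<notin> grp_center G" "w \<otimes>\<^bsub>G\<^esub> v = v \<otimes>\<^bsub>G\<^esub> w"
        using step.hyps(2) unfolding nc_adj_def comm_adj_def by auto
      have "grp_centralizer G v = grp_centralizer G u" using C_eq[OF u v] step.IH by simp
      moreover have "w \<in> grp_centralizer G v" unfolding grp_centralizer_def using w by simp
      ultimately show ?case using w by simp
    qed
  next
    assume vC: "v \<in> grp_centralizer G u - grp_center G"
    show "v \<in> {v. (nc_adj G)\<^sup>*\<^sup>* u v}"
    proof (cases "v = u")
      case False
      have "nc_adj G u v" unfolding nc_adj_def comm_adj_def using vC u False
        unfolding grp_centralizer_def by auto
      then show ?thesis by simp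
    qed simp
  qed
qed

end


lemma prod_conv: "(\<Prod>i\<leftarrow>[0..<length vs]. f (vs ! i)) = (\<Prod>a\<in>#image_mset g (mset vs). h a)"
  if "\<And>y. f y = h (g y)" for f :: "'a \<Rightarrow> 'c::comm_monoid_mult"
proof -
  have "map (\<lambda>i. f (vs ! i)) [0..<length vs] = map f vs"
    by (metis (no_types, lifting) map_eq_conv map_map map_nth comp_apply)
  then have "(\<Prod>i\<leftarrow>[0..<length vs]. f (vs ! i)) = prod_list (map f vs)" by simp
  also have "\<dots> = prod_mset (mset (map f vs))" by (metis prod_mset_prod_list)
  also have "\<dots> = (\<Prod>a\<in>#image_mset g (mset vs). h a)"
  proof -
    have "f = (\<lambda>y. h (g y))" using that by auto
    then show ?thesis by (simp add: image_mset.compositionality comp_def)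
  qed
  finally show ?thesis .
qed

theorem theorem2p9:
  fixes G :: "('a, 'b) monoid_scheme" and vs :: "'a list"
  assumes "group G" and "finite (carrier G)"
    and "\<not> (\<forall>x \<in> carrier G. \<forall>y \<in> carrier G. x \<otimes>\<^bsub>G\<^esub> y = y \<otimes>\<^bsub>G\<^esub> x)"
    and "con_condition G"
    and "distinct vs" and "set vs = carrier G"
  shows "let Z = grp_center G; comps = nc_components G;
             lam = (\<lambda>F. card (grp_centralizer G (SOME u. u \<in> F)));
             M = {#0#} + replicate_mset (card comps - 1) (real (card Z))
                 + (\<Sum>F\<in>comps. replicate_mset (card F - 1) (real (lam F)))
                 + replicate_mset (card Z) (real (card (carrier G)))
         in card comps \<ge> 2
            \<and> (\<forall>F\<in>comps. \<forall>u\<in>F. card (grp_centralizer G u) = lam F \<and> lam F = card F + card Z)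
            \<and> spectrum_mset (comm_laplacian G vs) M
            \<and> size (filter_mset (\<lambda>x. x \<noteq> 0) M) = card (carrier G) - 1
            \<and> Max (set_mset M) = real (card (carrier G))
            \<and> count M (real (card (carrier G))) = card Z"
proof -
  note grp = assms(1) and con = assms(4)
  define Zc where "Zc = grp_center G"
  obtain x y where x: "x \<in> carrier G" and y: "y \<in> carrier G" and xy: "x \<otimes>\<^bsub>G\<^esub> y \<noteq> y \<otimes>\<^bsub>G\<^esub> x"
    using assms(3) by blast
  have xZ: "x \<notin> Zc" using y xy unfolding Zc_def grp_center_def by auto
  have yZ: "y \<notin> Zc"
  proof
    assume "y \<in> Zc"
    then have "y \<otimes>\<^bsub>G\<^esub> x = x \<otimes>\<^bsub>G\<^esub> y" using x unfolding Zc_def grp_center_def by auto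
    with xy show False by simp
  qed
  define F0 where "F0 = gblk G x"
  define F1 where "F1 = gblk G y"
  have F01: "F0 \<noteq> F1"
  proof
    assume "F0 = F1"
    then have "grp_centralizer G x - Zc = grp_centralizer G y - Zc"
      using xZ yZ gblk_def[of G x] gblk_def[of G y] unfolding F0_def F1_def Zc_def by simp
    moreover have "y \<in> grp_centralizer G y - Zc" using self_C y yZ by simp
    ultimately have "y \<in> grp_centralizer G x" by blast
    then show False using xy unfolding grp_centralizer_def by simp
  qed
  interpret L: lapl "carrier G" Zc "gblk G" "comm_adj G" F0 F1
  proof (unfold_locales)
    show "finite (carrier G)" by (rule assms(2))
    show "Zc \<subseteq> carrier G" unfolding Zc_def by (rule Zc_sub[of G])
    show "Zc \<noteq> {}" unfolding Zc_def using one_Z[OF grp] by auto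
    show "\<And>x. x \<in> Zc \<Longrightarrow> gblk G x = Zc" unfolding gblk_def Zc_def by simp
    show "\<And>x. x \<in> carrier G \<Longrightarrow> x \<in> gblk G x" unfolding gblk_def by (simp add: self_C)
    show "\<And>x. x \<in> carrier G \<Longrightarrow> gblk G x \<subseteq> carrier G" unfolding gblk_def using Zc_sub[of G] C_sub[of G] by auto
    show "\<And>x y. x \<in> carrier G \<Longrightarrow> y \<in> gblk G x \<Longrightarrow> gblk G y = gblk G x"
    proof -
      fix x y assume x: "x \<in> carrier G" and yb: "y \<in> gblk G x"
      show "gblk G y = gblk G x"
      proof (cases "x \<in> grp_center G")
        case True then show ?thesis using yb unfolding gblk_def by simp
      next
        case False
        then have yC: "y \<in> grp_centralizer G x" "y \<notin> grp_center G" using yb unfolding gblk_def by auto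
        then have yV: "y \<in> carrier G" using C_sub[of G] by auto
        have "grp_centralizer G y = grp_centralizer G x" using C_eq[OF grp con x False yV yC(2) yC(1)] .
        then show ?thesis unfolding gblk_def using False yC by simp
      qed
    qed
    show "\<And>x y. comm_adj G x y \<longleftrightarrow> x \<in> carrier G \<and> y \<in> carrier G \<and> x \<noteq> y \<and> (x \<in> Zc \<or> y \<in> Zc \<or> gblk G x = gblk G y)"
      unfolding comm_adj_def Zc_def using comm_iff[OF grp con] by blast
    show "F0 \<in> gblk G ` (carrier G - Zc)" unfolding F0_def using x xZ by simp
    show "F1 \<in> gblk G ` (carrier G - Zc)" unfolding F1_def using y yZ by simp
    show "F0 \<noteq> F1" by (rule F01)
  qed
  have comps: "nc_components G = L.comps"
    unfolding nc_components_def L.comps_def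
  proof (rule image_cong)
    show "carrier G - grp_center G = carrier G - Zc" unfolding Zc_def ..
    fix u assume u: "u \<in> carrier G - Zc"
    show "{v. (nc_adj G)\<^sup>*\<^sup>* u v} = gblk G u"
      using comp_eq[OF grp con] u unfolding gblk_def Zc_def by auto
  qed
  have lamF: "\<And>F u. F \<in> L.comps \<Longrightarrow> u \<in> F \<Longrightarrow>
      card (grp_centralizer G u) = card (grp_centralizer G (SOME u. u \<in> F))
      \<and> card (grp_centralizer G (SOME u. u \<in> F)) = card F + card Zc"
  proof -
    fix F u assume F: "F \<in> L.comps" and u: "u \<in> F"
    obtain u0 where u0: "u0 \<in> carrier G" "u0 \<notin> Zc" and Fd: "F = gblk G u0"
      using L.comps_props[OF F] by blast
    have Fd': "F = grp_centralizer G u0 - Zc" using Fd u0 unfolding gblk_def Zc_def by simp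
    have Ceq: "\<And>w. w \<in> F \<Longrightarrow> grp_centralizer G w = grp_centralizer G u0"
    proof -
      fix w assume w: "w \<in> F"
      then have "w \<in> carrier G" "w \<notin> Zc" "w \<in> grp_centralizer G u0" using Fd' C_sub[of G] by auto
      then show "grp_centralizer G w = grp_centralizer G u0"
        using C_eq[OF grp con] u0 unfolding Zc_def by blast
    qed
    have s: "(SOME u. u \<in> F) \<in> F" using u by (metis someI_ex)
    have finC: "finite (grp_centralizer G u0)" using C_sub[of G] assms(2) finite_subset by blast
    have "card (grp_centralizer G u0) = card (grp_centralizer G u0 - Zc) + card Zc"
      using Z_C[OF u0(1)] finC unfolding Zc_def
      by (metis card_Diff_subset card_mono finite_subset le_add_diff_inverse2)
    then show "card (grp_centralizer G u) = card (grp_centralizer G (SOME u. u \<in> F))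
      \<and> card (grp_centralizer G (SOME u. u \<in> F)) = card F + card Zc"
      using Ceq[OF u] Ceq[OF s] Fd' by simp
  qed
  have deg: "\<And>v. comm_degree G v = L.deg v" unfolding comm_degree_def L.deg_def L.N_def ..
  have lap: "comm_laplacian G vs = mat (length vs) (length vs) (\<lambda>(i,j). L.Lf (vs ! i) (vs ! j))"
  proof (rule eq_matI)
    fix i j assume i: "i < dim_row (mat (length vs) (length vs) (\<lambda>(i,j). L.Lf (vs ! i) (vs ! j)))"
      and j: "j < dim_col (mat (length vs) (length vs) (\<lambda>(i,j). L.Lf (vs ! i) (vs ! j)))"
    have "i = j \<longleftrightarrow> vs ! i = vs ! j" using i j assms(5) by (simp add: nth_eq_iff_index_eq)
    then show "comm_laplacian G vs $$ (i, j) = mat (length vs) (length vs) (\<lambda>(i,j). L.Lf (vs ! i) (vs ! j)) $$ (i, j)"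
      using i j unfolding comm_laplacian_def L.Lf_def deg by simp
  qed (auto simp: comm_laplacian_def)
  define M where "M = {#0#} + replicate_mset (card (nc_components G) - 1) (real (card Zc))
                 + (\<Sum>F\<in>nc_components G. replicate_mset (card F - 1) (real (card (grp_centralizer G (SOME u. u \<in> F)))))
                 + replicate_mset (card Zc) (real (card (carrier G)))"
  have MM: "M = L.Mabs"
  proof -
    have "(\<Sum>F\<in>nc_components G. replicate_mset (card F - 1) (real (card (grp_centralizer G (SOME u. u \<in> F)))))
        = (\<Sum>F\<in>L.comps. replicate_mset (card F - 1) (L.zr + real (card F)))"
      unfolding comps
    proof (rule sum.cong[OF refl])
      fix F assume F: "F \<in> L.comps"
      obtain u0 where u0: "u0 \<in> carrier G" "u0 \<notin> Zc" and Fd: "F = gblk G u0"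
        using L.comps_props[OF F] by blast
      have "u0 \<in> F" using Fd L.blk_in u0 by simp
      then have "card (grp_centralizer G (SOME u. u \<in> F)) = card F + card Zc" using lamF[OF F] by blast
      then show "replicate_mset (card F - 1) (real (card (grp_centralizer G (SOME u. u \<in> F))))
          = replicate_mset (card F - 1) (L.zr + real (card F))" unfolding L.zr_def by (simp add: add.commute)
    qed
    then show ?thesis unfolding M_def L.Mabs_def comps L.zr_def L.nv_def by simp
  qed
  have cp: "char_poly (comm_laplacian G vs) = (\<Prod>a\<in>#M. [:- a, 1:])"
    unfolding lap L.charpoly_abs[OF assms(5,6)] MM L.mset_mu[OF assms(5,6), symmetric]
    by (rule prod_conv) simp
  have part2: "\<forall>F\<in>nc_components G. \<forall>u\<in>F. card (grp_centralizer G u) = card (grp_centralizer G (SOME u. u \<in> F))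
      \<and> card (grp_centralizer G (SOME u. u \<in> F)) = card F + card Zc"
    unfolding comps using lamF by blast
  show ?thesis
    unfolding Let_def Zc_def[symmetric] M_def[symmetric]
    using L.card_comps part2 cp L.size_filter[OF assms(5,6)] L.Max_Mabs[OF assms(5,6)] L.count_nv
    unfolding spectrum_mset_def comps MM L.nv_def by simp
qed


end
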